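(* Let $X$ be a graph on vertex set $V$ with $|V|=n$, possibly with loops (but no multiple edges), with adjacency matrix $A$ and vertex degrees $d_1,\dots,d_n$ (each loop counted once in the degree). Let $T=\operatorname{diag}(t_1,\dots,t_n)$ be a real diagonal matrix such that $T+A$ is positive semidefinite. If $S\subseteq V$ is an independent set of size $s$ containing $s_1$ vertices that carry loops, then \[ \frac{s^2}{n^2}\sum_{i\in V}(t_i+d_i)\;-\;2\frac{s}{n}\sum_{i\in S}(t_i+d_i)\;+\;\sum_{i\in S}t_i\;\ge\;-s_1 . \]
   Context: The adjacency matrix $A$ has $A_{ij}=1$ if $i\ne j$ are adjacent and $0$ otherwise, and $A_{ii}=1$ if vertex $i$ carries a loop and $0$ otherwise. An independent set is a set of vertices no two distinct members of which are adjacent; vertices with loops are allowed in an independent set. *)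

theory Defs
  imports "HOL-Analysis.Analysis"
begin

text \<open>A graph with possible loops on the finite vertex type 'n, given by a symmetric
  relation E; E i i means vertex i carries a loop.\<close>

definition adj_matrix :: "('n::finite \<Rightarrow> 'n \<Rightarrow> bool) \<Rightarrow> real^'n^'n" where
  "adj_matrix E = (\<chi> i j. if E i j then 1 else 0)"

definition degree :: "('n::finite \<Rightarrow> 'n \<Rightarrow> bool) \<Rightarrow> 'n \<Rightarrow> nat" where
  "degree E i = card {j. E i j}"

definition diag_mat :: "('n::finite \<Rightarrow> real) \<Rightarrow> real^'n^'n" where
  "diag_mat t = (\<chi> i j. if i = j then t i else 0)"

definition psd :: "real^'n^'n \<Rightarrow> bool" where
  "psd M \<longleftrightarrow> (\<forall>x. 0 \<le> x \<bullet> (M *v x))"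

definition independent_set :: "('n \<Rightarrow> 'n \<Rightarrow> bool) \<Rightarrow> 'n set \<Rightarrow> bool" where
  "independent_set E S \<longleftrightarrow> (\<forall>i\<in>S. \<forall>j\<in>S. i \<noteq> j \<longrightarrow> \<not> E i j)"

end

theory Submission
  imports Defs
begin

lemma quad_form:
  fixes M :: "real^'n::finite^'n"
  shows "x \<bullet> (M *v x) = (\<Sum>i\<in>UNIV. \<Sum>j\<in>UNIV. x$i * x$j * M$i$j)"
  by (simp add: inner_vec_def matrix_vector_mult_def sum_distrib_left mult.commute mult.left_commute)

theorem lemma2p1:
  fixes E :: "'n::finite \<Rightarrow> 'n \<Rightarrow> bool"
    and t :: "'n \<Rightarrow> real"
    and S :: "'n set"
  assumes sym: "\<And>i j. E i j \<longleftrightarrow> E j i"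
    and psd: "psd (diag_mat t + adj_matrix E)"
    and indep: "independent_set E S"
  shows "(real (card S))^2 / (real CARD('n))^2 * (\<Sum>i\<in>UNIV. t i + real (degree E i))
         - 2 * real (card S) / real CARD('n) * (\<Sum>i\<in>S. t i + real (degree E i))
         + (\<Sum>i\<in>S. t i)
         \<ge> - real (card {i\<in>S. E i i})"
proof -
  define c where "c = real (card S) / real CARD('n)"
  define u where "u = (\<lambda>i. if i \<in> S then 1 else (0::real))"
  define m where "m = (\<lambda>i j. (if i = j then t i else 0) + (if E i j then 1 else (0::real)))"
  define x where "x = (\<chi> i. u i - c)"
  have msym: "m i j = m j i" for i j unfolding m_def using sym by auto
  have M: "(diag_mat t + adj_matrix E)$i$j = m i j" for i j
    by (simp add: diag_mat_def adj_matrix_def m_def)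
  have "0 \<le> x \<bullet> ((diag_mat t + adj_matrix E) *v x)" using psd psd_def by blast
  also have "\<dots> = (\<Sum>i\<in>UNIV. \<Sum>j\<in>UNIV. (u i - c) * (u j - c) * m i j)"
    by (simp add: quad_form x_def diag_mat_def adj_matrix_def m_def)
  also have "\<dots> = (\<Sum>i\<in>UNIV. \<Sum>j\<in>UNIV. u i * u j * m i j)
      - c * (\<Sum>i\<in>UNIV. \<Sum>j\<in>UNIV. u i * m i j)
      - c * (\<Sum>i\<in>UNIV. \<Sum>j\<in>UNIV. u j * m i j)
      + c^2 * (\<Sum>i\<in>UNIV. \<Sum>j\<in>UNIV. m i j)"
    by (simp add: sum_distrib_left sum_subtractf sum.distrib[symmetric] algebra_simps power2_eq_square)
  finally have Q: "0 \<le> \<dots>" .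
  have rowsum: "(\<Sum>j\<in>UNIV. m i j) = t i + real (degree E i)" for i
  proof -
    have "(\<Sum>j\<in>UNIV. m i j) = (\<Sum>j\<in>UNIV. (if i = j then t i else 0)) + (\<Sum>j\<in>UNIV. (if E i j then 1 else (0::real)))"
      by (simp add: m_def sum.distrib)
    also have "\<dots> = t i + real (card {j. E i j})"
      by (simp add: sum.If_cases)
    finally show ?thesis by (simp add: degree_def)
  qed
  have T1: "(\<Sum>i\<in>UNIV. \<Sum>j\<in>UNIV. m i j) = (\<Sum>i\<in>UNIV. t i + real (degree E i))"
    by (simp add: rowsum)
  have T2: "(\<Sum>i\<in>UNIV. \<Sum>j\<in>UNIV. u i * m i j) = (\<Sum>i\<in>S. t i + real (degree E i))"
  proof -
    have "(\<Sum>i\<in>UNIV. \<Sum>j\<in>UNIV. u i * m i j) = (\<Sum>i\<in>UNIV. u i * (t i + real (degree E i)))"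
      by (simp add: sum_distrib_left[symmetric] rowsum)
    also have "\<dots> = (\<Sum>i\<in>S. t i + real (degree E i))"
      unfolding u_def by (simp add: sum.If_cases [where h="\<lambda>_. 0", simplified] if_distrib[where f="\<lambda>a. a * _"] sum.If_cases)
    finally show ?thesis .
  qed
  have T3: "(\<Sum>i\<in>UNIV. \<Sum>j\<in>UNIV. u j * m i j) = (\<Sum>i\<in>S. t i + real (degree E i))"
  proof -
    have "(\<Sum>i\<in>UNIV. \<Sum>j\<in>UNIV. u j * m i j) = (\<Sum>j\<in>UNIV. \<Sum>i\<in>UNIV. u j * m j i)"
      by (subst sum.swap) (simp add: msym)
    then show ?thesis using T2 by simp
  qed
  have T4: "(\<Sum>i\<in>UNIV. \<Sum>j\<in>UNIV. u i * u j * m i j) = (\<Sum>i\<in>S. t i) + real (card {i\<in>S. E i i})"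
  proof -
    have inner: "(\<Sum>j\<in>UNIV. u i * u j * m i j) = (if i \<in> S then t i + (if E i i then 1 else 0) else 0)" for i
    proof (cases "i \<in> S")
      case True
      have "(\<Sum>j\<in>UNIV. u i * u j * m i j) = (\<Sum>j\<in>UNIV. if j = i then m i i else 0)"
        apply (rule sum.cong, simp)
        using True indep unfolding independent_set_def u_def m_def by auto
      also have "\<dots> = m i i" by simp
      finally show ?thesis using True by (simp add: m_def)
    next
      case False then show ?thesis by (simp add: u_def)
    qed
    have "(\<Sum>i\<in>UNIV. \<Sum>j\<in>UNIV. u i * u j * m i j) = (\<Sum>i\<in>S. t i + (if E i i then 1 else 0))"
      by (simp add: inner sum.If_cases)
    also have "\<dots> = (\<Sum>i\<in>S. t i) + (\<Sum>i\<in>S. if E i i then 1 else (0::real))"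
      by (simp add: sum.distrib)
    also have "(\<Sum>i\<in>S. if E i i then 1 else (0::real)) = real (card {i\<in>S. E i i})"
      by (simp add: sum.If_cases Int_def conj_commute)
    finally show ?thesis .
  qed
  have "(real (card S))^2 / (real CARD('n))^2 = c^2" by (simp add: c_def power_divide)
  moreover have "2 * real (card S) / real CARD('n) = 2 * c" by (simp add: c_def)
  ultimately show ?thesis using Q T1 T2 T3 T4 by (simp add: algebra_simps)
qed

end
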